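(* Let $S$ be an idempotent semiring. Then $S$ satisfies the identity $x+xy+x\approx x$ if and only if $S$ satisfies $x+xyx+x\approx x$ and $\mathcal{R}^{\bullet}\subseteq\mathcal{D}^{+}$.
   Context: An idempotent semiring is an algebra $(S,+,\cdot)$ with two binary operations such that $(S,+)$ and $(S,\cdot)$ are bands (associative, with $x+x=x$ and $xx=x$), and both distributive laws $x(y+z)=xy+xz$ and $(x+y)z=xz+yz$ hold; addition is not assumed commutative. Green's relations: $a\,\mathcal{R}^{\bullet}\,b$ iff $ab=b$ and $ba=a$; $a\,\mathcal{D}^{+}\,b$ iff $a+b+a=a$ and $b+a+b=b$. *)

theory Defs
  imports Main
begin

text \<open>An idempotent semiring on the universe of type 'a, with addition a and
multiplication m (addition not assumed commutative).\<close>

definition idem_semiring :: "('a \<Rightarrow> 'a \<Rightarrow> 'a) \<Rightarrow> ('a \<Rightarrow> 'a \<Rightarrow> 'a) \<Rightarrow> bool" where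
  "idem_semiring a m \<longleftrightarrow>
     (\<forall>x y z. a (a x y) z = a x (a y z)) \<and> (\<forall>x. a x x = x) \<and>
     (\<forall>x y z. m (m x y) z = m x (m y z)) \<and> (\<forall>x. m x x = x) \<and>
     (\<forall>x y z. m x (a y z) = a (m x y) (m x z)) \<and>
     (\<forall>x y z. m (a x y) z = a (m x z) (m y z))"

definition R_mul :: "('a \<Rightarrow> 'a \<Rightarrow> 'a) \<Rightarrow> 'a \<Rightarrow> 'a \<Rightarrow> bool" where
  "R_mul m x y \<longleftrightarrow> m x y = y \<and> m y x = x"

definition D_add :: "('a \<Rightarrow> 'a \<Rightarrow> 'a) \<Rightarrow> 'a \<Rightarrow> 'a \<Rightarrow> bool" where
  "D_add a x y \<longleftrightarrow> a (a x y) x = x \<and> a (a y x) y = y"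

end

theory Submission
  imports Defs
begin

theorem lemma3p2:
  fixes a m :: "'a \<Rightarrow> 'a \<Rightarrow> 'a"
  assumes "idem_semiring a m"
  shows "(\<forall>x y. a (a x (m x y)) x = x) \<longleftrightarrow>
         ((\<forall>x y. a (a x (m (m x y) x)) x = x) \<and> (\<forall>x y. R_mul m x y \<longrightarrow> D_add a x y))"
proof -
  have aA: "\<And>x y z. a (a x y) z = a x (a y z)" and aI: "\<And>x. a x x = x"
    and mA: "\<And>x y z. m (m x y) z = m x (m y z)" and mI: "\<And>x. m x x = x"
    and dL: "\<And>x y z. m x (a y z) = a (m x y) (m x z)"
    and dR: "\<And>x y z. m (a x y) z = a (m x z) (m y z)"
    using assms unfolding idem_semiring_def by blast+
  show ?thesis
  proof
    assume H: "\<forall>x y. a (a x (m x y)) x = x"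
    have 1: "\<forall>x y. a (a x (m (m x y) x)) x = x"
      using H by (simp add: mA)
    have 2: "\<forall>x y. R_mul m x y \<longrightarrow> D_add a x y"
      unfolding R_mul_def D_add_def using H by (metis (no_types))
    show "(\<forall>x y. a (a x (m (m x y) x)) x = x) \<and> (\<forall>x y. R_mul m x y \<longrightarrow> D_add a x y)"
      using 1 2 by blast
  next
    assume "(\<forall>x y. a (a x (m (m x y) x)) x = x) \<and> (\<forall>x y. R_mul m x y \<longrightarrow> D_add a x y)"
    then have H1: "\<And>x y. a (a x (m (m x y) x)) x = x" and H2: "\<And>x y. R_mul m x y \<Longrightarrow> D_add a x y"
      by blast+
    show "\<forall>x y. a (a x (m x y)) x = x"
    proof (intro allI)
      fix x y
      define u where "u = a (a x (m x y)) x"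
      have "m x u = u" unfolding u_def by (simp only: dL mI mA[symmetric])
      moreover have "m u x = x" unfolding u_def using H1[of x y] by (simp only: dR dL mI mA)
      ultimately have "D_add a x u" using H2 unfolding R_mul_def by blast
      then have "a (a x u) x = x" unfolding D_add_def by blast
      moreover have "a (a x u) x = u" proof -
        have "a (a x u) x = a (a x x) (a (m x y) (a x x))" unfolding u_def by (simp only: aA)
        also have "\<dots> = u" unfolding u_def by (simp only: aI aA)
        finally show ?thesis .
      qed
      ultimately show "a (a x (m x y)) x = x" unfolding u_def by simp
    qed
  qed
qed

end
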